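(* Let $F$, $H$, $X$, $\Omega$, $Q$ and the sequences generated by the IneIREG method be as described in the context, and suppose $H$ is $\mu$-strongly monotone for some $\mu>0$. Suppose $0<\lambda_k<1/L_k$ for all $k\ge0$, where $L_k:=L_F+\eta_kL_H$; and $\alpha_0\in[0,1]$ and $\alpha_{k+1}\le(1-\beta_k)\alpha_k$ for all $k\ge0$, where $\beta_k:=\big(\frac{1}{1-\lambda_k^2L_k^2}+\frac{1}{2\lambda_k\eta_k\mu}\big)^{-1}$. Define $p_{-1}:=1$, $p_k:=\big(\prod_{i=0}^k(1-\beta_i)\big)^{-1}$ for $k\ge0$, and for $k\ge1$, $\Lambda_k:=\sum_{j=0}^{k-1}\lambda_j\eta_jp_j$, $\overline y_k:=\Lambda_k^{-1}\sum_{j=0}^{k-1}\lambda_j\eta_jp_jy_j$. Then for all $k\ge1$, $$-B_H\,\mathrm{dist}(\overline y_k,Q)\le\mathrm{Gap}(\overline y_k,H,Q)\le\frac{1}{\Lambda_k}\Big(\frac{D_X^2+\sum_{j=0}^{k-1}p_{j-1}\delta_j}{2}\Big).$$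
   Context: Work in $\mathbb{R}^n$ with Euclidean inner product $\langle\cdot,\cdot\rangle$ and norm $\|\cdot\|$. The maps $F\colon \mathrm{Dom}\,F\to\mathbb{R}^n$ and $H\colon\mathrm{Dom}\,H\to\mathbb{R}^n$ are monotone and Lipschitz continuous with constants $L_F>0$ and $L_H>0$; $H$ is $\mu$-strongly monotone means $\langle H(x)-H(y),x-y\rangle\ge\mu\|x-y\|^2$ for all $x,y\in\mathrm{Dom}\,H$. $X$ is a nonempty compact convex set and $\Omega$ a nonempty closed convex set with $X\subset\Omega\subset\mathrm{Dom}\,F\cap\mathrm{Dom}\,H$; $P_X,P_\Omega$ denote orthogonal projections. $Q:=\{x\in X:\langle F(x),y-x\rangle\ge0\ \forall y\in X\}$ is assumed nonempty. $D_X:=\sup_{x,y\in X}\|x-y\|$, $B_H:=\sup_{x\in Q}\|H(x)\|$, $\mathrm{dist}(y,Q)$ is the Euclidean distance to $Q$. $\mathrm{Gap}(z,H,Q):=\sup_{x\in Q}\langle H(x),z-x\rangle$. IneIREG method: start with $x_0=x_{-1}\in X$; for $k=0,1,\dots$, with parameters $\alpha_k\ge0$, $\lambda_k>0$, $\eta_k>0$, set $w_k=x_k+\alpha_k(x_k-x_{k-1})$, $w'_k=P_\Omega(w_k)$, $y_k=P_X\big(w_k-\lambda_k(F(w'_k)+\eta_kH(w'_k))\big)$, $x_{k+1}=P_X\big(w_k-\lambda_k(F(y_k)+\eta_kH(y_k))\big)$. Also $\delta_k:=\alpha_k(1+\alpha_k)\|x_k-x_{k-1}\|^2$ for $k\ge0$.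 *)

theory Defs
  imports "HOL-Analysis.Analysis"
begin

definition monotone_op :: "'a::real_inner set \<Rightarrow> ('a \<Rightarrow> 'a) \<Rightarrow> bool" where
  "monotone_op D F \<longleftrightarrow> (\<forall>x\<in>D. \<forall>y\<in>D. inner (F x - F y) (x - y) \<ge> 0)"

definition strongly_monotone_op :: "real \<Rightarrow> 'a::real_inner set \<Rightarrow> ('a \<Rightarrow> 'a) \<Rightarrow> bool" where
  "strongly_monotone_op \<mu> D H \<longleftrightarrow>
     (\<forall>x\<in>D. \<forall>y\<in>D. inner (H x - H y) (x - y) \<ge> \<mu> * (norm (x - y))\<^sup>2)"

definition VI_sol :: "('a::real_inner \<Rightarrow> 'a) \<Rightarrow> 'a set \<Rightarrow> 'a set" where
  "VI_sol F X = {x \<in> X. \<forall>y\<in>X. inner (F x) (y - x) \<ge> 0}"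

definition Gap :: "'a::real_inner \<Rightarrow> ('a \<Rightarrow> 'a) \<Rightarrow> 'a set \<Rightarrow> real" where
  "Gap z H Q = (SUP x\<in>Q. inner (H x) (z - x))"

definition ireg_beta :: "real \<Rightarrow> real \<Rightarrow> real \<Rightarrow> real \<Rightarrow> real \<Rightarrow> real" where
  "ireg_beta LF LH \<mu> lam eta =
     inverse (1 / (1 - lam\<^sup>2 * (LF + eta * LH)\<^sup>2) + 1 / (2 * lam * eta * \<mu>))"

end

theory Submission
  imports Defs
begin

lemma step_ineq:
  fixes w y xp xs g1 g2 :: "'a::euclidean_space"
  assumes P1: "inner (w - lam *\<^sub>R g2 - xp) (xs - xp) \<le> 0"
    and P2: "inner (w - lam *\<^sub>R g1 - y) (xp - y) \<le> 0"
    and Lg: "norm (g1 - g2) \<le> L * norm (w - y)" and lam: "lam > 0" and L: "L \<ge> 0"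
  shows "(norm (xp - xs))\<^sup>2 \<le> (norm (w - xs))\<^sup>2 - (1 - lam\<^sup>2 * L\<^sup>2) * (norm (w - y))\<^sup>2
            + 2 * lam * inner g2 (xs - y)"
proof -
  have e1: "(norm (xp - xs))\<^sup>2 = (norm (w - xs))\<^sup>2 - (norm (w - xp))\<^sup>2 + 2 * inner (w - xp) (xs - xp)"
    by (simp add: power2_norm_eq_inner inner_diff_left inner_diff_right inner_commute)
  have e2: "(norm (w - xp))\<^sup>2 = (norm (w - y))\<^sup>2 + (norm (y - xp))\<^sup>2 - 2 * inner (w - y) (xp - y)"
    by (simp add: power2_norm_eq_inner inner_diff_left inner_diff_right inner_commute)
  have p1: "inner (w - xp) (xs - xp) \<le> lam * inner g2 (xs - xp)"
    using P1 by (simp add: inner_diff_left)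
  have p2: "inner (w - y) (xp - y) \<le> lam * inner g1 (xp - y)"
    using P2 by (simp add: inner_diff_left)
  have e3: "inner g2 (xs - xp) = inner g2 (xs - y) - inner g2 (xp - y)"
    by (simp add: inner_diff_right)
  have e4: "inner g1 (xp - y) - inner g2 (xp - y) = inner (g1 - g2) (xp - y)"
    by (simp add: inner_diff_left)
  have c1: "inner (g1 - g2) (xp - y) \<le> L * norm (w - y) * norm (xp - y)"
  proof -
    have "inner (g1 - g2) (xp - y) \<le> norm (g1 - g2) * norm (xp - y)"
      using Cauchy_Schwarz_ineq2[of "g1 - g2" "xp - y"] by linarith
    also have "\<dots> \<le> L * norm (w - y) * norm (xp - y)"
      using Lg by (simp add: mult_right_mono)
    finally show ?thesis .
  qed
  have c2: "2 * lam * (L * norm (w - y) * norm (xp - y)) \<le> lam\<^sup>2 * L\<^sup>2 * (norm (w - y))\<^sup>2 + (norm (y - xp))\<^sup>2"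
  proof -
    have "0 \<le> (lam * L * norm (w - y) - norm (xp - y))\<^sup>2" by simp
    moreover have "norm (xp - y) = norm (y - xp)" by (simp add: norm_minus_commute)
    ultimately show ?thesis by (simp add: power2_eq_square algebra_simps)
  qed
  have "2 * lam * inner (g1 - g2) (xp - y) \<le> 2 * lam * (L * norm (w - y) * norm (xp - y))"
    using c1 lam by simp
  show ?thesis
    using e1 e2 p1 p2 e3 e4 c2 \<open>2 * lam * inner (g1 - g2) (xp - y) \<le> _\<close> lam
    by (simp add: algebra_simps)
qed

lemma beta_ineq:
  fixes a b u v n :: real
  assumes "a > 0" "b > 0" "u \<ge> 0" "v \<ge> 0" "n \<le> u + v" "n \<ge> 0"
  shows "inverse (1 / a + 1 / b) * n\<^sup>2 \<le> a * u\<^sup>2 + b * v\<^sup>2"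
proof -
  have i: "inverse (1 / a + 1 / b) = a * b / (a + b)" using assms by (simp add: field_simps)
  have "n\<^sup>2 \<le> (u + v)\<^sup>2" using assms by (simp add: power_mono)
  hence "a * b / (a + b) * n\<^sup>2 \<le> a * b / (a + b) * (u + v)\<^sup>2"
    using assms by (intro mult_left_mono) auto
  also have "\<dots> \<le> a * u\<^sup>2 + b * v\<^sup>2"
  proof -
    have "a * b * (u + v)\<^sup>2 \<le> (a + b) * (a * u\<^sup>2 + b * v\<^sup>2)"
    proof -
      have "0 \<le> (a * u - b * v)\<^sup>2" by simp
      thus ?thesis by (simp add: power2_eq_square algebra_simps)
    qed
    thus ?thesis using assms by (simp add: divide_le_eq mult.commute)
  qed
  finally show ?thesis using i by simp
qed

lemma inertial_id:
  fixes x x' xs :: "'a::real_inner"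
  shows "(norm (x + al *\<^sub>R (x - x') - xs))\<^sup>2 = (1 + al) * (norm (x - xs))\<^sup>2 - al * (norm (x' - xs))\<^sup>2
     + al * (1 + al) * (norm (x - x'))\<^sup>2"
  by (simp add: power2_norm_eq_inner inner_diff_left inner_diff_right inner_add_left inner_add_right inner_commute algebra_simps)

lemma sum_lemma:
  fixes a pm q dl c :: "nat \<Rightarrow> real"
  assumes a: "\<And>j. 0 \<le> a j" "\<And>j. a j \<le> D" and pm: "\<And>j. pm j > 0" "pm 0 = 1"
    and q: "\<And>j. q (Suc j) \<le> q j" "q 0 \<le> 1" "\<And>j. q j \<ge> 0"
    and st: "\<And>j. pm (Suc j) * a (Suc j) \<le> pm j * a j + q j * (a j - a (j - 1)) + pm j * dl j - 2 * c j"
  shows "2 * (\<Sum>j<K. c j) \<le> D + (\<Sum>j<K. pm j * dl j)"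
proof -
  have I: "pm K * a K + 2 * (\<Sum>j<K. c j) \<le> (\<Sum>j<K. pm j * dl j) + q (K - 1) * a (K - 1) + (1 - q (K - 1)) * D" for K
  proof (induction K)
    case 0
    have "(1 - q 0) * a 0 \<le> (1 - q 0) * D" using q a by (simp add: mult_left_mono)
    then show ?case using pm by (simp add: algebra_simps)
  next
    case (Suc K)
    have qm: "q K \<le> q (K - 1)" using q by (cases K) auto
    have "(q (K - 1) - q K) * a (K - 1) \<le> (q (K - 1) - q K) * D" using qm a by (simp add: mult_left_mono)
    then show ?case using Suc.IH st[of K] by (simp add: algebra_simps)
  qed
  have "pm K * a K \<ge> 0" using pm(1)[of K] a(1)[of K] by simp
  moreover have "q (K - 1) * a (K - 1) \<le> q (K - 1) * D" using q a by (simp add: mult_left_mono)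
  ultimately show ?thesis using I[of K] by (simp add: algebra_simps)
qed

theorem proposition4p6:
  fixes F H :: "'a::euclidean_space \<Rightarrow> 'a"
    and DomF DomH X \<Omega> :: "'a set"
    and LF LH \<mu> :: real
    and x y w w' :: "nat \<Rightarrow> 'a"
    and alpha lam eta :: "nat \<Rightarrow> real"
    and k :: nat
  assumes monF: "monotone_op DomF F" and lipF: "lipschitz_on LF DomF F" and LF_pos: "LF > 0"
    and monH: "monotone_op DomH H" and lipH: "lipschitz_on LH DomH H" and LH_pos: "LH > 0"
    and mu_pos: "\<mu> > 0" and smonH: "strongly_monotone_op \<mu> DomH H"
    and X_ne: "X \<noteq> {}" and X_cpt: "compact X" and X_cvx: "convex X"
    and Om_ne: "\<Omega> \<noteq> {}" and Om_closed: "closed \<Omega>" and Om_cvx: "convex \<Omega>"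
    and X_sub: "X \<subseteq> \<Omega>" and Om_sub: "\<Omega> \<subseteq> DomF \<inter> DomH"
    and Q_ne: "VI_sol F X \<noteq> {}"
    and x0: "x 0 \<in> X"
    and alpha_nn: "\<And>k. alpha k \<ge> 0" and lam_pos: "\<And>k. lam k > 0" and eta_pos: "\<And>k. eta k > 0"
    and w_def: "\<And>k. w k = x k + alpha k *\<^sub>R (x k - x (k - 1))"
    and w'_def: "\<And>k. w' k = closest_point \<Omega> (w k)"
    and y_def: "\<And>k. y k = closest_point X (w k - lam k *\<^sub>R (F (w' k) + eta k *\<^sub>R H (w' k)))"
    and x_step: "\<And>k. x (Suc k) = closest_point X (w k - lam k *\<^sub>R (F (y k) + eta k *\<^sub>R H (y k)))"
    and lam_bd: "\<And>k. lam k < 1 / (LF + eta k * LH)"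
    and alpha0: "alpha 0 \<le> 1"
    and alpha_dec: "\<And>k. alpha (Suc k) \<le> (1 - ireg_beta LF LH \<mu> (lam k) (eta k)) * alpha k"
    and k_pos: "k \<ge> 1"
  shows
   "let Q = VI_sol F X;
        beta = (%i. ireg_beta LF LH \<mu> (lam i) (eta i));
        pm = (%j. inverse (\<Prod>i<j. 1 - beta i));
        p = (%j. pm (Suc j));
        delta = (%j. alpha j * (1 + alpha j) * (norm (x j - x (j - 1)))\<^sup>2);
        Lam = (\<Sum>j<k. lam j * eta j * p j);
        ybar = inverse Lam *\<^sub>R (\<Sum>j<k. (lam j * eta j * p j) *\<^sub>R y j);
        BH = (SUP z\<in>Q. norm (H z))
    in - BH * infdist ybar Q \<le> Gap ybar H Q
       \<and> Gap ybar H Q \<le> inverse Lam * (((diameter X)\<^sup>2 + (\<Sum>j<k. pm j * delta j)) / 2)"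
  proof -
  define Q where "Q = VI_sol F X"
  define beta where "beta = (%i. ireg_beta LF LH \<mu> (lam i) (eta i))"
  define pm where "pm = (%j. inverse (\<Prod>i<j. 1 - beta i))"
  define p where "p = (%j. pm (Suc j))"
  define delta where "delta = (%j. alpha j * (1 + alpha j) * (norm (x j - x (j - 1)))\<^sup>2)"
  define Lam where "Lam = (\<Sum>j<k. lam j * eta j * p j)"
  define ybar where "ybar = inverse Lam *\<^sub>R (\<Sum>j<k. (lam j * eta j * p j) *\<^sub>R y j)"
  define BH where "BH = (SUP z\<in>Q. norm (H z))"
  define D where "D = diameter X"
  have Xcl: "closed X" using X_cpt compact_imp_closed by blast
  have Xbd: "bounded X" using X_cpt compact_imp_bounded by blast
  have xX: "x j \<in> X" for j
  proof (cases j)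
    case 0 then show ?thesis using x0 by simp
  next
    case (Suc i) then show ?thesis using x_step[of i] closest_point_in_set[OF Xcl X_ne] by simp
  qed
  have yX: "y j \<in> X" for j using y_def[of j] closest_point_in_set[OF Xcl X_ne] by simp
  define Lk where "Lk = (%j. LF + eta j * LH)"
  define aK where "aK = (%j. 1 - (lam j)\<^sup>2 * (Lk j)\<^sup>2)"
  define bK where "bK = (%j. 2 * lam j * eta j * \<mu>)"
  have Lk_pos: "Lk j > 0" for j using LF_pos LH_pos eta_pos[of j] by (simp add: Lk_def add_pos_nonneg)
  have lamL: "lam j * Lk j < 1" for j
    using lam_bd[of j] Lk_pos[of j] by (simp add: Lk_def less_divide_eq)
  have aK_pos: "aK j > 0" and aK_le: "aK j \<le> 1" for j
  proof -
    have "0 < lam j * Lk j" using lam_pos[of j] Lk_pos[of j] by simp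
    hence "(lam j * Lk j)\<^sup>2 < 1" using lamL[of j] by (simp add: power_less_one_iff abs_less_iff)
    then show "aK j > 0" by (simp add: aK_def power_mult_distrib)
    show "aK j \<le> 1" by (simp add: aK_def)
  qed
  have bK_pos: "bK j > 0" for j using lam_pos[of j] eta_pos[of j] mu_pos by (simp add: bK_def)
  have beta_eq: "beta j = inverse (1 / aK j + 1 / bK j)" for j
    by (simp add: beta_def ireg_beta_def aK_def bK_def Lk_def)
  have beta_pos: "beta j > 0" and beta_lt: "beta j < 1" for j
  proof -
    have "1 / aK j \<ge> 1" using aK_pos[of j] aK_le[of j] by (simp add: field_simps)
    moreover have "1 / bK j > 0" using bK_pos[of j] by simp
    ultimately have "1 / aK j + 1 / bK j > 1" by linarith
    then show "beta j > 0" "beta j < 1" unfolding beta_eq by (auto simp: inverse_less_1_iff)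
  qed
  have prod_pos: "(\<Prod>i<j. 1 - beta i) > 0" for j using beta_lt by (simp add: prod_pos)
  have pm_pos: "pm j > 0" for j using prod_pos[of j] by (simp add: pm_def)
  have pm0: "pm 0 = 1" by (simp add: pm_def)
  have pm_Suc: "pm (Suc j) * (1 - beta j) = pm j" for j
  proof -
    have P: "(\<Prod>i<Suc j. 1 - beta i) = (\<Prod>i<j. 1 - beta i) * (1 - beta j)" by simp
    have "1 - beta j \<noteq> 0" using beta_lt[of j] by simp
    moreover have "(\<Prod>i<j. 1 - beta i) \<noteq> 0" using prod_pos[of j] by (metis less_irrefl)
    moreover have "\<And>i. beta i \<noteq> 1" using beta_lt by (metis less_irrefl)
    ultimately show ?thesis unfolding pm_def P by (simp add: field_simps)
  qed
  have QX: "Q \<subseteq> X" by (auto simp: Q_def VI_sol_def)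
  have Qne: "Q \<noteq> {}" using Q_ne by (simp add: Q_def)
  have key: "2 * (\<Sum>j<k. lam j * eta j * p j * inner (H xs) (y j - xs)) \<le> D\<^sup>2 + (\<Sum>j<k. pm j * delta j)"
    if xsQ: "xs \<in> Q" for xs
  proof -
    have xsX: "xs \<in> X" using xsQ QX by auto
    have xsF: "\<forall>z\<in>X. inner (F xs) (z - xs) \<ge> 0" using xsQ by (simp add: Q_def VI_sol_def)
    define a where "a = (%j. (norm (x j - xs))\<^sup>2)"
    define h where "h = (%j. inner (H xs) (y j - xs))"
    have onestep: "a (Suc j) \<le> (1 - beta j) * (norm (w j - xs))\<^sup>2 - 2 * lam j * eta j * h j" for j
    proof -
      define G where "G = (%z. F z + eta j *\<^sub>R H z)"
      have xSX: "x (Suc j) \<in> X" by (rule xX)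
      have P1: "inner (w j - lam j *\<^sub>R G (y j) - x (Suc j)) (xs - x (Suc j)) \<le> 0"
        unfolding x_step[of j] G_def by (rule closest_point_dot[OF X_cvx Xcl xsX])
      have P2: "inner (w j - lam j *\<^sub>R G (w' j) - y j) (x (Suc j) - y j) \<le> 0"
        using closest_point_dot[OF X_cvx Xcl xSX, of "w j - lam j *\<^sub>R G (w' j)"]
        unfolding y_def[of j] G_def by simp
      have yOm: "y j \<in> \<Omega>" using yX X_sub by auto
      have w'Om: "w' j \<in> \<Omega>" using w'_def[of j] closest_point_in_set[OF Om_closed Om_ne] by simp
      have yD: "y j \<in> DomF" "y j \<in> DomH" using yOm Om_sub by auto
      have w'D: "w' j \<in> DomF" "w' j \<in> DomH" using w'Om Om_sub by auto
      have nw: "norm (w' j - y j) \<le> norm (w j - y j)"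
        using closest_point_lipschitz[OF Om_cvx Om_closed Om_ne, of "w j" "y j"]
          closest_point_self[OF yOm] w'_def[of j] by (simp add: dist_norm)
      have nF: "norm (F (w' j) - F (y j)) \<le> LF * norm (w' j - y j)"
        using lipschitz_onD[OF lipF w'D(1) yD(1)] by (simp add: dist_norm)
      have nH: "norm (H (w' j) - H (y j)) \<le> LH * norm (w' j - y j)"
        using lipschitz_onD[OF lipH w'D(2) yD(2)] by (simp add: dist_norm)
      have "G (w' j) - G (y j) = (F (w' j) - F (y j)) + eta j *\<^sub>R (H (w' j) - H (y j))"
        by (simp add: G_def algebra_simps)
      hence "norm (G (w' j) - G (y j)) \<le> norm (F (w' j) - F (y j)) + eta j * norm (H (w' j) - H (y j))"
        using eta_pos[of j] norm_triangle_ineq[of "F (w' j) - F (y j)" "eta j *\<^sub>R (H (w' j) - H (y j))"]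
        by simp
      also have "\<dots> \<le> LF * norm (w' j - y j) + eta j * (LH * norm (w' j - y j))"
        using nF nH eta_pos[of j] by (intro add_mono mult_left_mono) auto
      also have "\<dots> = Lk j * norm (w' j - y j)" by (simp add: Lk_def algebra_simps)
      also have "\<dots> \<le> Lk j * norm (w j - y j)" using nw Lk_pos[of j] by (simp add: mult_left_mono)
      finally have Lg: "norm (G (w' j) - G (y j)) \<le> Lk j * norm (w j - y j)" .
      have S: "(norm (x (Suc j) - xs))\<^sup>2 \<le> (norm (w j - xs))\<^sup>2 - (1 - (lam j)\<^sup>2 * (Lk j)\<^sup>2) * (norm (w j - y j))\<^sup>2
            + 2 * lam j * inner (G (y j)) (xs - y j)"
        by (rule step_ineq[OF P1 P2 Lg lam_pos]) (use Lk_pos[of j] in simp)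
      have mF: "inner (F (y j)) (xs - y j) \<le> 0"
      proof -
        have "inner (F (y j) - F xs) (y j - xs) \<ge> 0"
          using monF yD(1) xsX X_sub Om_sub unfolding monotone_op_def by blast
        moreover have "inner (F xs) (y j - xs) \<ge> 0" using xsF yX by blast
        ultimately show ?thesis
          by (simp add: inner_diff_left inner_diff_right inner_commute algebra_simps)
      qed
      have mH: "inner (H (y j)) (xs - y j) \<le> - \<mu> * (norm (y j - xs))\<^sup>2 - h j"
      proof -
        have "inner (H (y j) - H xs) (y j - xs) \<ge> \<mu> * (norm (y j - xs))\<^sup>2"
          using smonH yD(2) xsX X_sub Om_sub unfolding strongly_monotone_op_def by blast
        thus ?thesis unfolding h_def
          by (simp add: inner_diff_left inner_diff_right inner_commute algebra_simps)
      qed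
      have "inner (G (y j)) (xs - y j) = inner (F (y j)) (xs - y j) + eta j * inner (H (y j)) (xs - y j)"
        by (simp add: G_def inner_add_left)
      also have "\<dots> \<le> 0 + eta j * (- \<mu> * (norm (y j - xs))\<^sup>2 - h j)"
        using mF mH eta_pos[of j] by (intro add_mono mult_left_mono) auto
      finally have mG: "inner (G (y j)) (xs - y j) \<le> eta j * (- \<mu> * (norm (y j - xs))\<^sup>2 - h j)" by simp
      have mG2: "2 * lam j * inner (G (y j)) (xs - y j) \<le> 2 * lam j * (eta j * (- \<mu> * (norm (y j - xs))\<^sup>2 - h j))"
        using mG lam_pos[of j] by (intro mult_left_mono) auto
      have tri: "norm (w j - xs) \<le> norm (w j - y j) + norm (y j - xs)"
        using norm_triangle_ineq[of "w j - y j" "y j - xs"] by simp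
      have B: "beta j * (norm (w j - xs))\<^sup>2 \<le> aK j * (norm (w j - y j))\<^sup>2 + bK j * (norm (y j - xs))\<^sup>2"
        unfolding beta_eq by (rule beta_ineq[OF aK_pos bK_pos]) (use tri in auto)
      show ?thesis using S mG2 B unfolding a_def aK_def bK_def
        by (simp add: algebra_simps)
    qed
    have stp: "pm (Suc j) * a (Suc j) \<le> pm j * a j + (pm j * alpha j) * (a j - a (j - 1)) + pm j * delta j
        - 2 * (lam j * eta j * p j * h j)" for j
    proof -
      have W: "(norm (w j - xs))\<^sup>2 = (1 + alpha j) * a j - alpha j * a (j - 1) + delta j"
        unfolding w_def[of j] a_def delta_def by (rule inertial_id)
      have "pm (Suc j) * a (Suc j) \<le> pm (Suc j) * ((1 - beta j) * (norm (w j - xs))\<^sup>2 - 2 * lam j * eta j * h j)"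
        using onestep[of j] pm_pos[of "Suc j"] by (intro mult_left_mono) auto
      also have "\<dots> = pm j * (norm (w j - xs))\<^sup>2 - 2 * (lam j * eta j * p j * h j)"
        unfolding pm_Suc[of j, symmetric] by (simp add: p_def algebra_simps)
      finally show ?thesis unfolding W by (simp add: algebra_simps)
    qed
    have "2 * (\<Sum>j<k. lam j * eta j * p j * h j) \<le> D\<^sup>2 + (\<Sum>j<k. pm j * delta j)"
    proof (rule sum_lemma[where a=a and q="%j. pm j * alpha j", OF _ _ pm_pos pm0 _ _ _ stp])
      fix j
      show "0 \<le> a j" by (simp add: a_def)
      have "dist (x j) xs \<le> D" unfolding D_def by (rule diameter_bounded_bound[OF Xbd xX xsX])
      thus "a j \<le> D\<^sup>2" unfolding a_def dist_norm by (simp add: power_mono)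
      have "alpha (Suc j) \<le> (1 - beta j) * alpha j" using alpha_dec[of j] by (simp add: beta_def)
      hence "pm (Suc j) * alpha (Suc j) \<le> pm (Suc j) * ((1 - beta j) * alpha j)"
        using pm_pos[of "Suc j"] by (intro mult_left_mono) auto
      thus "pm (Suc j) * alpha (Suc j) \<le> pm j * alpha j" by (metis mult.assoc pm_Suc)
      show "0 \<le> pm j * alpha j" using pm_pos[of j] alpha_nn[of j] by simp
    next
      show "pm 0 * alpha 0 \<le> 1" using pm0 alpha0 by simp
    qed
    thus ?thesis by (simp add: h_def)
  qed
  have Lam_pos: "Lam > 0" unfolding Lam_def
    using k_pos lam_pos eta_pos pm_pos by (intro sum_pos) (auto simp: p_def lessThan_empty_iff)
  have upper: "inner (H xs) (ybar - xs) \<le> inverse Lam * ((D\<^sup>2 + (\<Sum>j<k. pm j * delta j)) / 2)"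
    if xsQ: "xs \<in> Q" for xs
  proof -
    have s1: "(\<Sum>j<k. (lam j * eta j * p j) *\<^sub>R (y j - xs)) = (\<Sum>j<k. (lam j * eta j * p j) *\<^sub>R y j) - Lam *\<^sub>R xs"
      by (simp add: scaleR_diff_right sum_subtractf Lam_def scaleR_sum_left)
    have "ybar - xs = inverse Lam *\<^sub>R (\<Sum>j<k. (lam j * eta j * p j) *\<^sub>R (y j - xs))"
      unfolding s1 ybar_def using Lam_pos by (simp add: scaleR_diff_right)
    hence "inner (H xs) (ybar - xs) = inverse Lam * (\<Sum>j<k. lam j * eta j * p j * inner (H xs) (y j - xs))"
      by (simp add: inner_sum_right)
    also have "\<dots> \<le> inverse Lam * ((D\<^sup>2 + (\<Sum>j<k. pm j * delta j)) / 2)"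
      using key[OF xsQ] Lam_pos by (intro mult_left_mono) auto
    finally show ?thesis .
  qed
  have gap_up: "Gap ybar H Q \<le> inverse Lam * ((D\<^sup>2 + (\<Sum>j<k. pm j * delta j)) / 2)"
    unfolding Gap_def using upper Qne by (intro cSUP_least) auto
  obtain M where M: "\<And>z. z \<in> X \<Longrightarrow> norm (H z) \<le> M"
  proof -
    have "continuous_on X H"
      using lipschitz_on_continuous_on[OF lipH] X_sub Om_sub continuous_on_subset by blast
    hence "compact (H ` X)" using X_cpt compact_continuous_image by blast
    then obtain M where "\<forall>v\<in>H ` X. norm v \<le> M" using compact_imp_bounded bounded_iff by metis
    thus ?thesis using that by auto
  qed
  obtain B where B: "\<And>z. z \<in> X \<Longrightarrow> norm z \<le> B" using Xbd bounded_iff by metis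
  have bddN: "bdd_above ((%z. norm (H z)) ` Q)" using M QX by (intro bdd_aboveI2) auto
  have bddG: "bdd_above ((%z. inner (H z) (ybar - z)) ` Q)"
  proof (intro bdd_aboveI2)
    fix z assume zQ: "z \<in> Q"
    hence zX: "z \<in> X" using QX by auto
    have "inner (H z) (ybar - z) \<le> norm (H z) * norm (ybar - z)" by (rule norm_cauchy_schwarz)
    also have "\<dots> \<le> M * (norm ybar + B)"
    proof (rule mult_mono)
      show "norm (H z) \<le> M" using M zX by auto
      show "norm (ybar - z) \<le> norm ybar + B" using B[OF zX] norm_triangle_ineq4[of ybar z] by linarith
      show "0 \<le> M" using M zX norm_ge_zero order_trans by blast
    qed simp
    finally show "inner (H z) (ybar - z) \<le> M * (norm ybar + B)" .
  qed
  have BH_nn: "BH \<ge> 0"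
  proof -
    obtain z where "z \<in> Q" using Qne by auto
    hence "norm (H z) \<le> BH" unfolding BH_def using bddN by (rule cSUP_upper)
    thus ?thesis using norm_ge_zero order_trans by blast
  qed
  have low1: "- BH * dist ybar z \<le> Gap ybar H Q" if zQ: "z \<in> Q" for z
  proof -
    have "norm (H z) \<le> BH" unfolding BH_def using zQ bddN by (rule cSUP_upper)
    hence "norm (H z) * norm (ybar - z) \<le> BH * norm (ybar - z)" by (simp add: mult_right_mono)
    moreover have "- (norm (H z) * norm (ybar - z)) \<le> inner (H z) (ybar - z)"
      using Cauchy_Schwarz_ineq2[of "H z" "ybar - z"] by linarith
    moreover have "inner (H z) (ybar - z) \<le> Gap ybar H Q"
      unfolding Gap_def using zQ bddG by (rule cSUP_upper)
    ultimately show ?thesis by (simp add: dist_norm)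
  qed
  have gap_low: "- BH * infdist ybar Q \<le> Gap ybar H Q"
  proof (cases "BH = 0")
    case True
    obtain z where "z \<in> Q" using Qne by auto
    then show ?thesis using low1 True by fastforce
  next
    case False
    hence BHp: "BH > 0" using BH_nn by simp
    have "- Gap ybar H Q / BH \<le> infdist ybar Q"
      unfolding infdist_notempty[OF Qne]
    proof (rule cINF_greatest[OF Qne])
      fix z assume "z \<in> Q"
      hence "- BH * dist ybar z \<le> Gap ybar H Q" by (rule low1)
      hence "- Gap ybar H Q \<le> dist ybar z * BH" by (simp add: algebra_simps)
      thus "- Gap ybar H Q / BH \<le> dist ybar z" by (metis BHp minus_divide_left pos_divide_le_eq)
    qed
    hence "- Gap ybar H Q \<le> infdist ybar Q * BH" by (metis BHp minus_divide_left pos_divide_le_eq)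
    thus ?thesis by (simp add: algebra_simps)
  qed
  have main: "- BH * infdist ybar Q \<le> Gap ybar H Q
       \<and> Gap ybar H Q \<le> inverse Lam * (((diameter X)\<^sup>2 + (\<Sum>j<k. pm j * delta j)) / 2)"
    using gap_low gap_up by (simp add: D_def)
  show ?thesis
    using main unfolding Let_def Q_def beta_def pm_def p_def delta_def Lam_def ybar_def BH_def .
qed

end
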